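(* Let $a,b,c,d>0$, $\theta>0$ satisfy $-(\theta a+\theta^2 b)<(\theta-1)(\theta+1)^2<\theta c+\theta^2 d$, and consider on $\mathcal{I}=[0,1]^2$ the system $$\dot x=x(1-x)\big[xr(-c+d-a+b)+x(a-b)-r(d+b)+b\big]+\mu(1-2x),\qquad \dot r=r(1-r)\big[\theta x-(1-x)\big].$$ Then for every $\mu\in(0,1]$ the boundary $\partial\mathcal{I}$ is repelling.
   Context: The boundary $\partial\mathcal{I}$ is the union of the four sides $\mathcal{B}_t=\{r=1\}$, $\mathcal{B}_b=\{r=0\}$, $\mathcal{B}_l=\{x=0\}$, $\mathcal{B}_r=\{x=1\}$ of the square. The boundary is called repelling if there is $\delta>0$ such that every solution $(x(t),r(t))$ with initial condition in the open square $(0,1)^2$ satisfies $\liminf_{t\to\infty}\operatorname{dist}((x(t),r(t)),\partial\mathcal{I})>\delta$, i.e. trajectories starting in the interior eventually stay a uniform positive distance away from the boundary. *)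

theory Defs
  imports "HOL-Analysis.Analysis"
begin

definition fx :: "real \<Rightarrow> real \<Rightarrow> real \<Rightarrow> real \<Rightarrow> real \<Rightarrow> real \<Rightarrow> real \<Rightarrow> real" where
  "fx a b c d \<mu> x r =
     x * (1 - x) * (x * r * (- c + d - a + b) + x * (a - b) - r * (d + b) + b) + \<mu> * (1 - 2 * x)"

definition fr :: "real \<Rightarrow> real \<Rightarrow> real \<Rightarrow> real" where
  "fr \<theta> x r = r * (1 - r) * (\<theta> * x - (1 - x))"

definition is_solution ::
  "real \<Rightarrow> real \<Rightarrow> real \<Rightarrow> real \<Rightarrow> real \<Rightarrow> real \<Rightarrow> (real \<Rightarrow> real) \<Rightarrow> (real \<Rightarrow> real) \<Rightarrow> bool" where
  "is_solution a b c d \<theta> \<mu> x r \<longleftrightarrow>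
     (\<forall>t\<ge>0. (x has_real_derivative fx a b c d \<mu> (x t) (r t)) (at t within {0..})
            \<and> (r has_real_derivative fr \<theta> (x t) (r t)) (at t within {0..}))"

definition square_boundary :: "(real \<times> real) set" where
  "square_boundary =
     {p. snd p = 1 \<and> fst p \<in> {0..1}} \<union> {p. snd p = 0 \<and> fst p \<in> {0..1}} \<union>
     {p. fst p = 0 \<and> snd p \<in> {0..1}} \<union> {p. fst p = 1 \<and> snd p \<in> {0..1}}"

definition boundary_repelling :: "real \<Rightarrow> real \<Rightarrow> real \<Rightarrow> real \<Rightarrow> real \<Rightarrow> real \<Rightarrow> bool" where
  "boundary_repelling a b c d \<theta> \<mu> \<longleftrightarrow>
     (\<exists>\<delta>>0. \<forall>x r. is_solution a b c d \<theta> \<mu> x r \<longrightarrow>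
        x 0 \<in> {0<..<1} \<longrightarrow> r 0 \<in> {0<..<1} \<longrightarrow>
        Liminf at_top (\<lambda>t. ereal (infdist (x t, r t) square_boundary)) > ereal \<delta>)"

end

theory Submission
  imports Defs
begin


lemma deriv_at_of_within:
  assumes "(f has_real_derivative D) (at t within {0..})" "0 < t"
  shows "(f has_real_derivative D) (at t)"
proof -
  have "(f has_real_derivative D) (at t within {0<..})"
    using assms(1) by (rule DERIV_subset) auto
  moreover have "at t within {0<..} = at t" using assms(2) by (intro at_within_open) auto
  ultimately show ?thesis by simp
qed

lemma cont_of_deriv:
  assumes "\<forall>t\<ge>0. (f has_real_derivative f' t) (at t within {0..})"
  shows "continuous_on {0..} f"
  unfolding continuous_on_eq_continuous_within
  using assms DERIV_continuous by (metis atLeast_iff)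

lemma mono_lemma:
  assumes d: "\<forall>t\<ge>0. (f has_real_derivative f' t) (at t within {0..})"
    and "0 \<le> s" "s \<le> t" and pos: "\<And>u. s < u \<Longrightarrow> u < t \<Longrightarrow> f' u \<ge> 0"
  shows "f s \<le> f t"
proof (rule DERIV_nonneg_imp_increasing_open[OF \<open>s \<le> t\<close>])
  fix u assume u: "s < u" "u < t"
  show "\<exists>y. (f has_real_derivative y) (at u) \<and> 0 \<le> y"
    using deriv_at_of_within[of f "f' u" u] d u pos \<open>0 \<le> s\<close> by auto
next
  show "continuous_on {s..t} f"
    using cont_of_deriv[OF d] by (rule continuous_on_subset) (use \<open>0 \<le> s\<close> in auto)
qed

lemma exp_lower:
  assumes d: "\<forall>t\<ge>0. (r has_real_derivative r' t) (at t within {0..})"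
    and "0 \<le> s" "s \<le> t" and b: "\<And>u. s < u \<Longrightarrow> u < t \<Longrightarrow> r' u \<ge> - L * r u"
  shows "r t \<ge> r s * exp (- L * (t - s))"
proof -
  have d2: "\<forall>u\<ge>0. ((\<lambda>u. r u * exp (L * u)) has_real_derivative
      (r' u * exp (L * u) + r u * (exp (L * u) * L))) (at u within {0..})"
    using d by (auto intro!: derivative_eq_intros)
  have "r s * exp (L * s) \<le> r t * exp (L * t)"
  proof (rule mono_lemma[OF d2 assms(2,3)])
    fix u assume "s < u" "u < t"
    then have "r' u + L * r u \<ge> 0" using b by force
    then have "(r' u + L * r u) * exp (L * u) \<ge> 0" by simp
    then show "r' u * exp (L * u) + r u * (exp (L * u) * L) \<ge> 0"
      by (simp add: algebra_simps)
  qed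
  then have "r s * exp (L * s) * exp (- L * t) \<le> r t * exp (L * t) * exp (- L * t)"
    by (simp add: mult_right_mono)
  also have "r t * exp (L * t) * exp (- L * t) = r t"
    by (simp add: mult.assoc flip: exp_add)
  also have "r s * exp (L * s) * exp (- L * t) = r s * exp (- L * (t - s))"
    by (simp add: mult.assoc algebra_simps flip: exp_add)
  finally show ?thesis .
qed

lemma exp_growth:
  assumes d: "\<forall>t\<ge>0. (r has_real_derivative r' t) (at t within {0..})"
    and "0 \<le> s" "s \<le> t" and b: "\<And>u. s < u \<Longrightarrow> u < t \<Longrightarrow> r' u \<ge> k * r u"
  shows "r t \<ge> r s * exp (k * (t - s))"
  using exp_lower[OF d assms(2,3), of "-k"] b by auto

lemma lin_growth:
  assumes d: "\<forall>t\<ge>0. (x has_real_derivative x' t) (at t within {0..})"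
    and "0 \<le> s" "s \<le> t" and b: "\<And>u. s < u \<Longrightarrow> u < t \<Longrightarrow> x' u \<ge> m"
  shows "x t \<ge> x s + m * (t - s)"
proof -
  have d2: "\<forall>u\<ge>0. ((\<lambda>u. x u - m * u) has_real_derivative (x' u - m)) (at u within {0..})"
    using d by (auto intro!: derivative_eq_intros)
  have "x s - m * s \<le> x t - m * t"
    by (rule mono_lemma[OF d2 assms(2,3)]) (use b in force)
  then show ?thesis by (simp add: algebra_simps)
qed

lemma last_time:
  fixes f :: "real \<Rightarrow> real"
  assumes "continuous_on {s..t} f" "s \<le> t" "f s \<ge> c"
  shows "\<exists>t1\<in>{s..t}. f t1 \<ge> c \<and> (\<forall>u. t1 < u \<and> u \<le> t \<longrightarrow> f u < c)"
proof -
  define S where "S = {s..t} \<inter> f -` {c..}"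
  have cl: "closed S" unfolding S_def by (rule continuous_closed_preimage[OF assms(1)]) auto
  have ne: "S \<noteq> {}" using assms unfolding S_def by auto
  have bd: "bdd_above S" unfolding S_def by (auto intro: bdd_aboveI[of _ t])
  have inS: "Sup S \<in> S" using closed_contains_Sup[OF ne bd cl] .
  show ?thesis
  proof (intro bexI conjI allI impI)
    show "f (Sup S) \<ge> c" "Sup S \<in> {s..t}" using inS unfolding S_def by auto
    fix u assume "Sup S < u \<and> u \<le> t"
    moreover have "u \<in> S \<Longrightarrow> u \<le> Sup S" using cSup_upper[OF _ bd] by auto
    ultimately show "f u < c" unfolding S_def using inS S_def by force
  qed
qed

lemma barrier:
  assumes d: "\<forall>t\<ge>0. (x has_real_derivative x' t) (at t within {0..})"
    and "0 \<le> s" "s \<le> t" "x s \<ge> X"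
    and b: "\<And>u. s < u \<Longrightarrow> u < t \<Longrightarrow> x u < X \<Longrightarrow> x' u \<ge> 0"
  shows "x t \<ge> X"
proof (rule ccontr)
  assume neg: "\<not> X \<le> x t"
  have c: "continuous_on {s..t} x"
    using cont_of_deriv[OF d] by (rule continuous_on_subset) (use \<open>0 \<le> s\<close> in auto)
  obtain t1 where t1: "t1 \<in> {s..t}" "x t1 \<ge> X" "\<forall>u. t1 < u \<and> u \<le> t \<longrightarrow> x u < X"
    using last_time[OF c \<open>s \<le> t\<close> \<open>x s \<ge> X\<close>] by blast
  have "x t1 \<le> x t"
    by (rule mono_lemma[OF d]) (use t1 \<open>0 \<le> s\<close> b in auto)
  then show False using neg t1 by auto
qed


lemma reach:
  assumes d: "\<forall>t\<ge>0. (x has_real_derivative x' t) (at t within {0..})"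
    and "0 \<le> s" "x s \<ge> 0" "m > 0" "X \<ge> 0"
    and b: "\<And>u. s < u \<Longrightarrow> u < s + X / m \<Longrightarrow> x u < X \<Longrightarrow> x' u \<ge> m"
  shows "\<exists>s2\<in>{s..s + X/m}. x s2 \<ge> X"
proof (rule ccontr)
  assume "\<not> ?thesis"
  then have lt: "\<And>u. s \<le> u \<Longrightarrow> u \<le> s + X/m \<Longrightarrow> x u < X" by force
  have "x (s + X/m) \<ge> x s + m * (s + X/m - s)"
    by (rule lin_growth[OF d]) (use assms lt in auto)
  moreover have "m * (s + X/m - s) = X" using \<open>m > 0\<close> by simp
  ultimately show False using lt[of "s + X/m"] assms by auto
qed

lemma strip:
  fixes x r x' r' :: "real \<Rightarrow> real"
  assumes dx: "\<forall>t\<ge>0. (x has_real_derivative x' t) (at t within {0..})"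
    and dr: "\<forall>t\<ge>0. (r has_real_derivative r' t) (at t within {0..})"
    and rpos: "\<forall>t\<ge>0. r t > 0" and xnn: "\<forall>t\<ge>0. x t \<ge> 0"
    and pars: "\<eta> > 0" "m > 0" "k > 0" "L > 0" "X \<ge> 0"
    and h1: "\<forall>t\<ge>0. r t \<le> \<eta> \<longrightarrow> x t < X \<longrightarrow> x' t \<ge> m"
    and h2: "\<forall>t\<ge>0. r t \<le> \<eta> \<longrightarrow> x t \<ge> X \<longrightarrow> r' t \<ge> k * r t"
    and h3: "\<forall>t\<ge>0. r' t \<ge> - L * r t"
  shows "\<exists>T. \<forall>t\<ge>T. r t \<ge> \<eta> * exp (- L * (X / m))"
proof -
  define T where "T = X / m"
  define \<delta> where "\<delta> = \<eta> * exp (- L * T)"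
  have T0: "T \<ge> 0" using pars by (simp add: T_def)
  have \<delta>le: "\<delta> \<le> \<eta>" using pars T0 by (simp add: \<delta>_def mult_nonneg_nonneg)
  have ex: "\<exists>s\<ge>0. r s \<ge> \<eta>"
  proof (rule ccontr)
    assume "\<not> ?thesis"
    then have small: "\<And>t. t \<ge> 0 \<Longrightarrow> r t < \<eta>" by force
    have "\<exists>s2\<in>{0..0 + X/m}. x s2 \<ge> X"
    proof (rule reach[OF dx _ _ pars(2) pars(5)])
      show "0 \<le> x 0" using xnn by simp
      fix u assume "0 < u" "u < 0 + X / m" "x u < X"
      then show "m \<le> x' u" using h1 small[of u] by simp
    qed simp
    then obtain s2 where s2: "s2 \<in> {0..0 + X/m}" "x s2 \<ge> X" by blast
    have xX: "x t \<ge> X" if "t \<ge> s2" for t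
    proof (rule barrier[OF dx _ that s2(2)])
      show "0 \<le> s2" using s2 by simp
      fix u assume "s2 < u" "u < t" "x u < X"
      then have "m \<le> x' u" using h1 small[of u] s2 by simp
      then show "0 \<le> x' u" using pars by simp
    qed
    define t where "t = s2 + \<eta> / (r s2 * k)"
    have rs2: "r s2 > 0" using rpos s2 by auto
    have "r t \<ge> r s2 * exp (k * (t - s2))"
    proof (rule exp_growth[OF dr])
      show "0 \<le> s2" using s2 by simp
      show "s2 \<le> t" using rs2 pars by (simp add: t_def)
      fix u assume "s2 < u" "u < t"
      then show "k * r u \<le> r' u" using h2 small[of u] xX[of u] s2 by simp
    qed
    moreover have "exp (k * (t - s2)) \<ge> 1 + k * (t - s2)" by (rule exp_ge_add_one_self)
    moreover have "k * (t - s2) = \<eta> / r s2" using pars rs2 by (simp add: t_def)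
    ultimately have "r t \<ge> r s2 * (1 + \<eta> / r s2)"
      using rs2 by (smt (verit) mult_left_mono)
    also have "r s2 * (1 + \<eta> / r s2) = r s2 + \<eta>" using rs2 by (simp add: field_simps)
    finally have "r t > \<eta>" using rs2 by simp
    moreover have "t \<ge> 0" using s2 rs2 pars by (simp add: t_def)
    ultimately show False using small by force
  qed
  then obtain s0 where s0: "s0 \<ge> 0" "r s0 \<ge> \<eta>" by blast
  have "r t \<ge> \<delta>" if ts0: "t \<ge> s0" for t
  proof (cases "r t \<ge> \<eta>")
    case True then show ?thesis using \<delta>le by simp
  next
    case False
    have c: "continuous_on {s0..t} r"
      using cont_of_deriv[OF dr] by (rule continuous_on_subset) (use s0 in auto)
    obtain s1 where s1: "s1 \<in> {s0..t}" "r s1 \<ge> \<eta>" "\<forall>u. s1 < u \<and> u \<le> t \<longrightarrow> r u < \<eta>"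
      using last_time[OF c ts0 s0(2)] by blast
    have s1pos: "s1 \<ge> 0" using s1 s0 by auto
    show ?thesis
    proof (cases "t \<le> s1 + T")
      case True
      have "r t \<ge> r s1 * exp (- L * (t - s1))"
        using exp_lower[OF dr s1pos, of t L] s1 s1pos h3 by force
      moreover have "exp (- L * (t - s1)) \<ge> exp (- L * T)"
        using True pars by (simp add: mult_left_mono)
      ultimately show ?thesis unfolding \<delta>_def using s1(2) pars
        by (smt (verit, best) exp_gt_zero mult_mono)
    next
      case False
      obtain s2 where s2: "s2 \<in> {s1..s1 + X/m}" "x s2 \<ge> X"
        using reach[OF dx s1pos _ pars(2) pars(5)] xnn h1 s1 s1pos False T_def
        by (smt (verit, ccfv_SIG) atLeastAtMost_iff)
      have s2t: "s2 \<le> t" using s2 False T_def by auto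
      have xX: "x u \<ge> X" if su: "s2 \<le> u" "u \<le> t" for u
      proof (rule barrier[OF dx _ su(1) s2(2)])
        show "0 \<le> s2" using s2 s1pos by simp
        fix v assume v: "s2 < v" "v < u" "x v < X"
        have "r v < \<eta>" using s1(3) v s2 su by force
        then have "m \<le> x' v" using h1 v s2 s1pos by force
        then show "0 \<le> x' v" using pars by simp
      qed
      have "r t \<ge> r s2"
      proof (rule mono_lemma[OF dr _ s2t])
        show "0 \<le> s2" using s2 s1pos by auto
        fix u assume u: "s2 < u" "u < t"
        have u0: "u \<ge> 0" using u s2 s1pos by auto
        have "r u < \<eta>" using s1(3) u s2 by force
        then have "r u \<le> \<eta>" by simp
        moreover have "x u \<ge> X" using xX u by auto
        ultimately have "r' u \<ge> k * r u" using h2 u0 by blast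
        moreover have "r u > 0" using rpos u0 by simp
        then have "k * r u \<ge> 0" using pars by simp
        ultimately show "r' u \<ge> 0" by linarith
      qed
      moreover have "r s2 \<ge> r s1 * exp (- L * (s2 - s1))"
        using exp_lower[OF dr s1pos, of s2 L] s2 s1pos h3 by force
      moreover have "exp (- L * (s2 - s1)) \<ge> exp (- L * T)"
      proof -
        have "s2 - s1 \<le> X / m" using s2 by simp
        then have "L * (s2 - s1) \<le> L * (X / m)" using pars mult_left_mono[of "s2 - s1" "X / m" L] by linarith
        then show ?thesis unfolding T_def by simp
      qed
      ultimately show ?thesis unfolding \<delta>_def using s1(2) pars
        by (smt (verit, best) exp_gt_zero mult_mono)
    qed
  qed
  then show ?thesis unfolding \<delta>_def T_def by blast
qed


definition hh :: "real \<Rightarrow> real \<Rightarrow> real \<Rightarrow> real \<Rightarrow> real" where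
  "hh A B \<mu> x = x * (1 - x) * (x * A + (1 - x) * B) + \<mu> * (1 - 2 * x)"

lemma polyA:
  fixes y z :: real
  assumes "1/2 < y" "y \<le> z"
  shows "z^2 * (1 - z) * (2*y - 1) \<le> y^2 * (1 - y) * (2*z - 1)"
proof -
  define s where "s = y + z"
  define Q where "Q = s - s^2 + y*z*(2* s - 1)"
  have id: "y^2 * (1 - y) * (2*z - 1) - z^2 * (1 - z) * (2*y - 1) = (z - y) * Q"
    unfolding Q_def s_def by (simp add: algebra_simps power2_eq_square power3_eq_cube)
  have "(y - 1/2) * (z - 1/2) \<ge> 0" using assms by simp
  then have yz: "y*z \<ge> s/2 - 1/4" unfolding s_def by (simp add: algebra_simps)
  have "2* s - 1 \<ge> 0" using assms s_def by simp
  then have "y*z*(2* s-1) \<ge> (s/2 - 1/4)*(2* s-1)" by (rule mult_right_mono[OF yz])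
  then have "Q \<ge> s - s^2 + (s/2 - 1/4)*(2* s-1)" unfolding Q_def by simp
  also have "s - s^2 + (s/2 - 1/4)*(2* s-1) = 1/4" by (simp add: algebra_simps power2_eq_square)
  finally have "Q \<ge> 0" by simp
  then have "(z - y) * Q \<ge> 0" using assms by simp
  then show ?thesis using id by simp
qed

lemma polyB:
  fixes y z :: real
  assumes "1/2 < y" "y \<le> z" "z \<le> 1"
  shows "z * (1 - z)^2 * (2*y - 1) \<le> y * (1 - y)^2 * (2*z - 1)"
proof -
  define s where "s = y + z"
  define Q where "Q = (s - 1)^2 + y*z*(3 - 2* s)"
  have id: "y * (1 - y)^2 * (2*z - 1) - z * (1 - z)^2 * (2*y - 1) = (z - y) * Q"
    unfolding Q_def s_def by (simp add: algebra_simps power2_eq_square power3_eq_cube)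
  have yz0: "y * z \<ge> 0" using assms by simp
  have "Q \<ge> 0"
  proof (cases "s \<le> 3/2")
    case True
    then have "y*z*(3 - 2* s) \<ge> 0" using yz0 by simp
    then show ?thesis unfolding Q_def by simp
  next
    case False
    have "(y - z)^2 \<ge> 0" by simp
    then have yz: "y*z \<le> s^2/4" unfolding s_def by (simp add: algebra_simps power2_eq_square)
    have "2* s - 3 \<ge> 0" using False by simp
    then have "y*z*(2* s-3) \<le> s^2/4*(2* s-3)" by (rule mult_right_mono[OF yz])
    moreover have "(s-1)^2 - s^2/4*(2* s-3) = (2 - s)*(2* s^2 - 3* s + 2)/4"
      by (simp add: algebra_simps power2_eq_square power3_eq_cube)
    moreover have "2 - s \<ge> 0" using assms s_def by simp
    moreover have "2* s^2 - 3* s + 2 \<ge> 0"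
    proof -
      have "2* s^2 - 3* s + 2 = 2*(s - 3/4)^2 + 7/8" by (simp add: algebra_simps power2_eq_square)
      moreover have "(s - 3/4)^2 \<ge> 0" by simp
      ultimately show ?thesis by linarith
    qed
    ultimately have "(s-1)^2 - s^2/4*(2* s-3) \<ge> 0" and "y*z*(2* s-3) \<le> s^2/4*(2* s-3)"
      by (simp_all only: mult_nonneg_nonneg divide_nonneg_nonneg)
    moreover have "Q = (s-1)^2 - y*z*(2* s-3)" unfolding Q_def by (simp add: algebra_simps)
    ultimately show ?thesis by linarith
  qed
  then have "(z - y) * Q \<ge> 0" using assms by simp
  then show ?thesis using id by simp
qed

lemma hh_pos:
  assumes "A > 0" "B > 0" "\<mu> > 0" "z \<le> 1" "hh A B \<mu> z > 0" "0 \<le> y" "y \<le> z"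
  shows "hh A B \<mu> y > 0"
proof (cases "y \<le> 1/2")
  case True
  have y1: "1 - y > 0" using True by simp
  have p: "y * (1 - y) * (y * A + (1 - y) * B) \<ge> 0"
    using assms y1 by (intro mult_nonneg_nonneg add_nonneg_nonneg) auto
  show ?thesis
  proof (cases "y = 1/2")
    case True
    have "y * (1 - y) * (y * A + (1 - y) * B) > 0"
      using assms True by (intro mult_pos_pos add_pos_pos) auto
    moreover have "\<mu> * (1 - 2*y) = 0" using True by simp
    ultimately show ?thesis unfolding hh_def by linarith
  next
    case False
    then have "\<mu> * (1 - 2*y) > 0" using \<open>y \<le> 1/2\<close> assms by simp
    then show ?thesis using p by (simp add: hh_def)
  qed
next
  case False
  define p where "p x = A * (x^2 * (1 - x)) + B * (x * (1 - x)^2)" for x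
  have pe: "hh A B \<mu> x = p x - \<mu> * (2*x - 1)" for x
    unfolding hh_def p_def by (simp add: algebra_simps power2_eq_square)
  have yl: "1/2 < y" using False by simp
  have "A * (z^2 * (1 - z) * (2*y - 1)) \<le> A * (y^2 * (1 - y) * (2*z - 1))"
    by (rule mult_left_mono[OF polyA[OF yl assms(7)]]) (use assms in simp)
  moreover have "B * (z * (1 - z)^2 * (2*y - 1)) \<le> B * (y * (1 - y)^2 * (2*z - 1))"
    by (rule mult_left_mono[OF polyB[OF yl assms(7,4)]]) (use assms in simp)
  ultimately have pp: "p z * (2*y - 1) \<le> p y * (2*z - 1)"
    unfolding p_def by (simp add: algebra_simps)
  have "\<mu> * (2*z - 1) < p z" using assms(5) pe[of z] by simp
  then have "\<mu> * (2*z - 1) * (2*y - 1) < p z * (2*y - 1)" using yl by simp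
  also note pp
  finally have "(\<mu> * (2*y - 1)) * (2*z - 1) < p y * (2*z - 1)" by (simp add: algebra_simps)
  moreover have "2*z - 1 \<ge> 0" using yl assms(7) by simp
  ultimately have "\<mu> * (2*y - 1) < p y" by (rule mult_right_less_imp_less)
  then show ?thesis using pe[of y] by simp
qed



lemma S_bounds:
  fixes a b c d x r :: real
  assumes "a > 0" "b > 0" "c > 0" "d > 0" "0 \<le> x" "x \<le> 1" "0 \<le> r" "r \<le> 1"
  shows "x * r * (- c + d - a + b) + x * (a - b) - r * (d + b) + b \<ge> - (a+b+c+d)"
proof -
  have e: "x * r * (- c + d - a + b) + x * (a - b) - r * (d + b) + b
      = (1 - r) * (x*a + (1-x)*b) - r * (x*c + (1-x)*d)" by (simp add: algebra_simps)
  have "(1 - r) * (x*a + (1-x)*b) \<ge> 0" using assms by (intro mult_nonneg_nonneg add_nonneg_nonneg) auto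
  moreover have "x*c + (1-x)*d \<le> c + d"
  proof -
    have "x*c \<le> c" "(1-x)*d \<le> d"
      using assms by (auto intro: mult_left_le_one_le simp: mult.commute)
    then show ?thesis by linarith
  qed
  moreover have "x*c + (1-x)*d \<ge> 0" using assms by (intro add_nonneg_nonneg) auto
  ultimately have "r * (x*c + (1-x)*d) \<le> c + d"
    using assms mult_left_le_one_le[of "x*c + (1-x)*d" r] by (simp add: mult.commute)
  then show ?thesis using e \<open>(1 - r) * (x*a + (1-x)*b) \<ge> 0\<close> assms by linarith
qed

lemma F0:
  fixes a b c d x r \<mu> :: real
  assumes "a > 0" "b > 0" "c > 0" "d > 0" "0 \<le> x" "x \<le> 1" "0 \<le> r" "r \<le> 1" "\<mu> \<ge> 0"
  shows "fx a b c d \<mu> x r \<ge> \<mu> - (a+b+c+d + 2*\<mu>) * x"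
proof -
  define S where "S = x * r * (- c + d - a + b) + x * (a - b) - r * (d + b) + b"
  have S: "S \<ge> - (a+b+c+d)" unfolding S_def by (rule S_bounds) (use assms in auto)
  have "x * (1 - x) * S \<ge> x * (1 - x) * (- (a+b+c+d))"
    using S assms by (intro mult_left_mono) auto
  moreover have "x * (1 - x) * (- (a+b+c+d)) \<ge> - x * (a+b+c+d)"
  proof -
    have "x * (1 - x) \<le> x" using assms by (simp add: mult_left_le_one_le algebra_simps)
    then have "x * (1 - x) * (a+b+c+d) \<le> x * (a+b+c+d)" using assms by (intro mult_right_mono) auto
    moreover have "x*(1-x)*(-(a+b+c+d)) = -(x*(1-x)*(a+b+c+d))" by (rule mult_minus_right)
    ultimately show ?thesis by linarith
  qed
  ultimately have "x * (1 - x) * S \<ge> - x * (a+b+c+d)" by linarith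
  then show ?thesis unfolding fx_def S_def[symmetric] by (simp add: algebra_simps)
qed

lemma F0':
  fixes a b c d x r \<mu> :: real
  assumes "a > 0" "b > 0" "c > 0" "d > 0" "0 \<le> x" "x \<le> 1" "0 \<le> r" "r \<le> 1" "\<mu> \<ge> 0"
  shows "- fx a b c d \<mu> x r \<ge> \<mu> - (a+b+c+d + 2*\<mu>) * (1 - x)"
proof -
  have e: "- fx a b c d \<mu> x r = fx d c b a \<mu> (1 - x) (1 - r)"
    unfolding fx_def by (simp add: algebra_simps)
  have "fx d c b a \<mu> (1 - x) (1 - r) \<ge> \<mu> - (d+c+b+a + 2*\<mu>) * (1 - x)"
    by (rule F0) (use assms in auto)
  then show ?thesis using e by (simp add: algebra_simps)
qed

lemma F1:
  fixes a b c d x r \<mu> :: real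
  assumes "a > 0" "b > 0" "c > 0" "d > 0" "0 \<le> x" "x \<le> 1" "0 \<le> r" "r \<le> 1"
  shows "fx a b c d \<mu> x r \<ge> hh a b \<mu> x - (a+b+c+d) * r"
proof -
  define P where "P = x*a + (1-x)*b + (x*c + (1-x)*d)"
  have e: "fx a b c d \<mu> x r - hh a b \<mu> x = - ((x * (1 - x)) * (r * P))"
    unfolding fx_def hh_def P_def by (simp add: algebra_simps)
  have P0: "P \<ge> 0" unfolding P_def using assms by (intro add_nonneg_nonneg mult_nonneg_nonneg) auto
  have "x*a \<le> a" "(1-x)*b \<le> b" "x*c \<le> c" "(1-x)*d \<le> d"
    using assms by (auto intro: mult_left_le_one_le simp: mult.commute)
  then have PM: "P \<le> a+b+c+d" unfolding P_def by linarith
  have x1: "x * (1 - x) \<le> 1" "x * (1 - x) \<ge> 0" using assms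
    by (auto intro: mult_le_one)
  have rP: "r * P \<ge> 0" using P0 assms by simp
  have "(x * (1 - x)) * (r * P) \<le> r * P" using x1 rP by (intro mult_left_le_one_le) auto
  also have "r * P \<le> r * (a+b+c+d)" using PM assms by (intro mult_left_mono) auto
  finally show ?thesis using e by (simp add: algebra_simps)
qed

lemma F1':
  fixes a b c d x r \<mu> :: real
  assumes "a > 0" "b > 0" "c > 0" "d > 0" "0 \<le> x" "x \<le> 1" "0 \<le> r" "r \<le> 1"
  shows "- fx a b c d \<mu> x r \<ge> hh d c \<mu> (1 - x) - (a+b+c+d) * (1 - r)"
proof -
  have e: "- fx a b c d \<mu> x r = fx d c b a \<mu> (1 - x) (1 - r)"
    unfolding fx_def by (simp add: algebra_simps)
  have "fx d c b a \<mu> (1 - x) (1 - r) \<ge> hh d c \<mu> (1 - x) - (d+c+b+a) * (1 - r)"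
    by (rule F1) (use assms in auto)
  then show ?thesis using e by (simp add: algebra_simps)
qed

lemma F6:
  assumes "\<theta> > 0" "0 \<le> x" "x \<le> 1" "0 \<le> r" "r \<le> 1"
  shows "fr \<theta> x r \<ge> - r" and "- fr \<theta> x r \<ge> - \<theta> * (1 - r)"
proof -
  have tx: "\<theta> * x \<le> \<theta>" "\<theta> * x \<ge> 0" using assms mult_left_mono[of x 1 \<theta>] by auto
  have g: "\<theta> * x - (1 - x) \<ge> -1" "\<theta> * x - (1 - x) \<le> \<theta>" using assms tx by linarith+
  have "(1 - r) * (\<theta> * x - (1 - x)) \<ge> -1"
  proof (cases "\<theta> * x - (1 - x) \<ge> 0")
    case True
    then have "(1 - r) * (\<theta> * x - (1 - x)) \<ge> 0" using assms by simp
    then show ?thesis by linarith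
  next
    case False
    have "(1 - r) * (\<theta> * x - (1 - x)) \<ge> 1 * (\<theta> * x - (1 - x))"
      using False assms by (intro mult_right_mono_neg) auto
    then show ?thesis using g by simp
  qed
  then have "r * ((1 - r) * (\<theta> * x - (1 - x))) \<ge> r * (-1)" using assms by (intro mult_left_mono) auto
  then show "fr \<theta> x r \<ge> - r" unfolding fr_def by (simp add: algebra_simps)
  have "r * (1 - (\<theta> * x + x)) \<ge> - \<theta>"
  proof (cases "1 - (\<theta> * x + x) \<ge> 0")
    case True
    then have "r * (1 - (\<theta> * x + x)) \<ge> 0" using assms by simp
    then show ?thesis using assms by linarith
  next
    case False
    have "r * (1 - (\<theta> * x + x)) \<ge> 1 * (1 - (\<theta> * x + x))"
      using False assms by (intro mult_right_mono_neg) auto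
    then show ?thesis using g by (simp add: algebra_simps)
  qed
  then have "(1 - r) * (r * (1 - (\<theta> * x + x))) \<ge> (1 - r) * (- \<theta>)" using assms by (intro mult_left_mono) auto
  then show "- fr \<theta> x r \<ge> - \<theta> * (1 - r)" unfolding fr_def by (simp add: algebra_simps)
qed

lemma F8:
  assumes "\<theta> > 0" "0 \<le> r" "r \<le> \<eta>" "\<eta> < 1" "x \<ge> X" "(\<theta> + 1) * X - 1 \<ge> 0"
  shows "fr \<theta> x r \<ge> ((1 - \<eta>) * ((\<theta> + 1) * X - 1)) * r"
proof -
  have g: "\<theta> * x - (1 - x) \<ge> (\<theta> + 1) * X - 1" using assms
    by (smt (verit) distrib_right mult_le_cancel_left_pos mult_cancel_right2)
  have "(1 - r) * (\<theta> * x - (1 - x)) \<ge> (1 - \<eta>) * ((\<theta> + 1) * X - 1)"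
    using assms g by (intro mult_mono) auto
  then have "r * ((1 - r) * (\<theta> * x - (1 - x))) \<ge> r * ((1 - \<eta>) * ((\<theta> + 1) * X - 1))"
    using assms by (intro mult_left_mono) auto
  then show ?thesis unfolding fr_def by (simp add: algebra_simps)
qed

lemma F9:
  assumes "\<theta> > 0" "0 \<le> 1 - r" "1 - r \<le> \<eta>" "\<eta> < 1" "x \<le> X" "1 - (\<theta> + 1) * X \<ge> 0"
  shows "- fr \<theta> x r \<ge> ((1 - \<eta>) * (1 - (\<theta> + 1) * X)) * (1 - r)"
proof -
  have g: "1 - (\<theta> + 1) * x \<ge> 1 - (\<theta> + 1) * X" using assms
    by (simp add: mult_left_mono)
  have "r * (1 - (\<theta> + 1) * x) \<ge> (1 - \<eta>) * (1 - (\<theta> + 1) * X)"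
    using assms g by (intro mult_mono) auto
  then have "(1 - r) * (r * (1 - (\<theta> + 1) * x)) \<ge> (1 - r) * ((1 - \<eta>) * (1 - (\<theta> + 1) * X))"
    using assms by (intro mult_left_mono) auto
  then show ?thesis unfolding fr_def by (simp add: algebra_simps)
qed



lemma choose_X:
  assumes "A > 0" "B > 0" "\<mu> > 0" "0 < z" "z < 1" "hh A B \<mu> z > 0"
  shows "\<exists>X m0. z < X \<and> X < 1 \<and> m0 > 0 \<and> (\<forall>y\<in>{0..X}. hh A B \<mu> y \<ge> m0)"
proof -
  have cont: "continuous_on UNIV (hh A B \<mu>)" unfolding hh_def by (intro continuous_intros)
  then have "isCont (hh A B \<mu>) z" by (simp add: continuous_on_eq_continuous_at)
  then have "eventually (\<lambda>y. 0 < hh A B \<mu> y) (at z)"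
    using order_tendstoD(1)[of "hh A B \<mu>" "hh A B \<mu> z" "at z" 0] assms(6)
    by (simp add: isCont_def)
  then obtain dd where dd: "dd > 0" "\<And>y. y \<noteq> z \<Longrightarrow> dist y z < dd \<Longrightarrow> 0 < hh A B \<mu> y"
    unfolding eventually_at by auto
  define X where "X = min (z + dd/2) ((z+1)/2)"
  have Xle: "X \<le> (z+1)/2" unfolding X_def by (rule min.cobounded2)
  have zX: "z < X" unfolding X_def using dd assms by simp
  have "(z+1)/2 < 1" using assms(5) by simp
  then have X1: "X < 1" by (rule le_less_trans[OF Xle])
  note X = zX X1
  have "dist X z < dd" using dd X by (auto simp: X_def dist_real_def)
  then have hX: "hh A B \<mu> X > 0" using dd X by auto
  have pos: "hh A B \<mu> y > 0" if "y \<in> {0..X}" for y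
    using hh_pos[OF assms(1,2,3) _ hX] that X by auto
  obtain y0 where y0: "y0 \<in> {0..X}" "\<forall>y\<in>{0..X}. hh A B \<mu> y0 \<le> hh A B \<mu> y"
  proof -
    have "continuous_on {0..X} (hh A B \<mu>)" using continuous_on_subset[OF cont] by blast
    moreover have "{0..X} \<noteq> {}" using X assms by simp
    ultimately show ?thesis using continuous_attains_inf[of "{0..X}" "hh A B \<mu>"] that by blast
  qed
  show ?thesis using X y0 pos[OF y0(1)] by blast
qed

lemma hh_x0:
  assumes "a > 0" "b > 0" "\<theta> > 0" "0 < \<mu>" "\<mu> \<le> 1"
    and "- (\<theta> * a + \<theta>^2 * b) < (\<theta> - 1) * (\<theta> + 1)^2"
  shows "hh a b \<mu> (1 / (1 + \<theta>)) > 0"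
proof -
  define q where "q = 1 / (1 + \<theta>)"
  have q0: "q > 0" using assms by (simp add: q_def)
  have q1: "q * (1 + \<theta>) = 1" using assms by (simp add: q_def)
  have e: "hh a b \<mu> q = q^3 * (\<theta> * a + \<theta>^2 * b + \<mu> * (\<theta> - 1) * (\<theta> + 1)^2)"
  proof -
    have "1 - q = \<theta> * q" using q1 by (simp add: algebra_simps)
    moreover have "1 - 2 * q = (\<theta> - 1) * q" using q1 by (simp add: algebra_simps)
    ultimately have "hh a b \<mu> q = q * (\<theta> * q) * (q * a + (\<theta> * q) * b) + \<mu> * ((\<theta> - 1) * q)"
      unfolding hh_def by simp
    also have "\<dots> = q^3 * (\<theta> * a + \<theta>^2 * b) + \<mu> * (\<theta> - 1) * q"
      by (simp add: algebra_simps power2_eq_square power3_eq_cube)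
    also have "\<mu> * (\<theta> - 1) * q = q^3 * (\<mu> * (\<theta> - 1) * (\<theta> + 1)^2)"
    proof -
      have "q^3 * (\<mu> * (\<theta> - 1) * (\<theta> + 1)^2) = \<mu> * (\<theta> - 1) * q * (q * (1 + \<theta>))^2"
        by (simp add: algebra_simps power2_eq_square power3_eq_cube)
      then show ?thesis using q1 by (simp only: mult_1_right power_one)
    qed
    finally show ?thesis by (simp add: distrib_left)
  qed
  have "\<theta> * a + \<theta>^2 * b + \<mu> * (\<theta> - 1) * (\<theta> + 1)^2 > 0"
  proof (cases "\<theta> \<ge> 1")
    case True
    have "\<mu> * (\<theta> - 1) * (\<theta> + 1)^2 \<ge> 0" using True assms by simp
    moreover have "\<theta> * a > 0" "\<theta>^2 * b > 0" using assms by simp_all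
    ultimately show ?thesis by linarith
  next
    case False
    have "(1 - \<mu>) * (1 - \<theta>) * (\<theta> + 1)^2 \<ge> 0" using False assms by simp
    moreover have "\<mu> * (\<theta> - 1) * (\<theta> + 1)^2 - (\<theta> - 1) * (\<theta> + 1)^2 = (1 - \<mu>) * (1 - \<theta>) * (\<theta> + 1)^2"
      by (simp add: algebra_simps)
    ultimately show ?thesis using assms(6) by linarith
  qed
  then show ?thesis using e q0 unfolding q_def by simp
qed

lemma hh_top:
  assumes "c > 0" "d > 0" "\<theta> > 0" "0 < \<mu>" "\<mu> \<le> 1"
    and "(\<theta> - 1) * (\<theta> + 1)^2 < \<theta> * c + \<theta>^2 * d"
  shows "hh d c \<mu> (\<theta> / (1 + \<theta>)) > 0"
proof -
  define q where "q = 1 / (1 + \<theta>)"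
  have q0: "q > 0" using assms by (simp add: q_def)
  have q1: "q * (1 + \<theta>) = 1" using assms by (simp add: q_def)
  have u: "\<theta> / (1 + \<theta>) = \<theta> * q" by (simp add: q_def)
  have e: "hh d c \<mu> (\<theta> * q) = q^3 * (\<theta> * c + \<theta>^2 * d + \<mu> * (1 - \<theta>) * (\<theta> + 1)^2)"
  proof -
    have "1 - \<theta> * q = q" using q1 by (simp add: algebra_simps)
    moreover have "1 - 2 * (\<theta> * q) = (1 - \<theta>) * q" using q1 by (simp add: algebra_simps)
    ultimately have "hh d c \<mu> (\<theta> * q) = (\<theta> * q) * q * ((\<theta> * q) * d + q * c) + \<mu> * ((1 - \<theta>) * q)"
      unfolding hh_def by simp
    also have "\<dots> = q^3 * (\<theta> * c + \<theta>^2 * d) + \<mu> * (1 - \<theta>) * q"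
      by (simp add: algebra_simps power2_eq_square power3_eq_cube)
    also have "\<mu> * (1 - \<theta>) * q = q^3 * (\<mu> * (1 - \<theta>) * (\<theta> + 1)^2)"
    proof -
      have "q^3 * (\<mu> * (1 - \<theta>) * (\<theta> + 1)^2) = \<mu> * (1 - \<theta>) * q * (q * (1 + \<theta>))^2"
        by (simp add: algebra_simps power2_eq_square power3_eq_cube)
      then show ?thesis using q1 by (simp only: mult_1_right power_one)
    qed
    finally show ?thesis by (simp add: distrib_left)
  qed
  have "\<theta> * c + \<theta>^2 * d + \<mu> * (1 - \<theta>) * (\<theta> + 1)^2 > 0"
  proof (cases "\<theta> \<le> 1")
    case True
    have "\<mu> * (1 - \<theta>) * (\<theta> + 1)^2 \<ge> 0" using True assms by simp
    moreover have "\<theta> * c > 0" "\<theta>^2 * d > 0" using assms by simp_all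
    ultimately show ?thesis by linarith
  next
    case False
    have "(1 - \<mu>) * (\<theta> - 1) * (\<theta> + 1)^2 \<ge> 0" using False assms by simp
    moreover have "\<mu> * (1 - \<theta>) * (\<theta> + 1)^2 - (1 - \<theta>) * (\<theta> + 1)^2 = (1 - \<mu>) * (\<theta> - 1) * (\<theta> + 1)^2"
      by (simp add: algebra_simps)
    moreover have "(1 - \<theta>) * (\<theta> + 1)^2 = - ((\<theta> - 1) * (\<theta> + 1)^2)" by (simp add: algebra_simps)
    ultimately show ?thesis using assms(6) by linarith
  qed
  then show ?thesis using e q0 u by simp
qed

lemma infdist_lb:
  assumes "\<delta> \<le> x" "\<delta> \<le> 1 - x" "\<delta> \<le> r" "\<delta> \<le> 1 - r"
  shows "\<delta> \<le> infdist (x, r) square_boundary"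
proof -
  have ne: "square_boundary \<noteq> {}" unfolding square_boundary_def by force
  have "\<delta> \<le> dist (x, r) q" if q: "q \<in> square_boundary" for q
  proof -
    have f: "dist x (fst q) \<le> dist (x, r) q" using dist_fst_le[of "(x, r)" q] by simp
    have s: "dist r (snd q) \<le> dist (x, r) q" using dist_snd_le[of "(x, r)" q] by simp
    from q show ?thesis unfolding square_boundary_def
      using f s assms by (auto simp: dist_real_def)
  qed
  then show ?thesis unfolding infdist_notempty[OF ne] by (intro cINF_greatest ne) auto
qed



lemma invariance:
  fixes a b c d \<theta> \<mu> :: real and x r :: "real \<Rightarrow> real"
  assumes pos: "a > 0" "b > 0" "c > 0" "d > 0" "\<theta> > 0" "\<mu> > 0"
    and dx: "\<forall>t\<ge>0. (x has_real_derivative fx a b c d \<mu> (x t) (r t)) (at t within {0..})"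
    and dr: "\<forall>t\<ge>0. (r has_real_derivative fr \<theta> (x t) (r t)) (at t within {0..})"
    and i0: "0 < x 0" "x 0 < 1" "0 < r 0" "r 0 < 1"
  shows "\<forall>t\<ge>0. 0 < x t \<and> x t < 1 \<and> 0 < r t \<and> r t < 1"
proof (rule ccontr)
  assume neg: "\<not> ?thesis"
  define P where "P t \<longleftrightarrow> 0 < x t \<and> x t < 1 \<and> 0 < r t \<and> r t < 1" for t
  define S where "S = {t. t \<ge> 0 \<and> \<not> P t}"
  define L where "L = a + b + c + d + 2 * \<mu>"
  have dmx: "\<forall>t\<ge>0. ((\<lambda>t. 1 - x t) has_real_derivative - fx a b c d \<mu> (x t) (r t)) (at t within {0..})"
    using dx by (auto intro!: derivative_eq_intros)
  have dmr: "\<forall>t\<ge>0. ((\<lambda>t. 1 - r t) has_real_derivative - fr \<theta> (x t) (r t)) (at t within {0..})"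
    using dr by (auto intro!: derivative_eq_intros)
  have Seq: "S = ({0..} \<inter> x -` ({..0} \<union> {1..})) \<union> ({0..} \<inter> r -` ({..0} \<union> {1..}))"
    unfolding S_def P_def by auto
  have cl: "closed S" unfolding Seq
    by (intro closed_Un continuous_closed_preimage cont_of_deriv[OF dx] cont_of_deriv[OF dr]) auto
  have ne: "S \<noteq> {}" using neg unfolding S_def P_def by auto
  have bd: "bdd_below S" unfolding S_def by (auto intro: bdd_belowI[of _ 0])
  define t1 where "t1 = Inf S"
  have t1S: "t1 \<in> S" unfolding t1_def by (rule closed_contains_Inf[OF ne bd cl])
  have t10: "t1 \<ge> 0" using t1S unfolding S_def by auto
  have before: "P u" if "0 \<le> u" "u < t1" for u
  proof (rule ccontr)
    assume "\<not> P u"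
    then have "u \<in> S" using that unfolding S_def by auto
    then have "t1 \<le> u" unfolding t1_def by (rule cInf_lower[OF _ bd])
    then show False using that by simp
  qed
  have bx: "0 \<le> x u" "x u \<le> 1" "0 \<le> r u" "r u \<le> 1" if "0 < u" "u < t1" for u
    using before[of u] that unfolding P_def by auto
  have "x t1 \<ge> x 0 * exp (- L * (t1 - 0))"
  proof (rule exp_lower[OF dx order_refl t10])
    fix u assume u: "0 < u" "u < t1"
    have "fx a b c d \<mu> (x u) (r u) \<ge> \<mu> - L * x u"
      unfolding L_def by (rule F0) (use pos bx[OF u] in auto)
    then show "fx a b c d \<mu> (x u) (r u) \<ge> - L * x u" using pos by simp
  qed
  moreover have "(1 - x t1) \<ge> (1 - x 0) * exp (- L * (t1 - 0))"
  proof (rule exp_lower[OF dmx order_refl t10])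
    fix u assume u: "0 < u" "u < t1"
    have "- fx a b c d \<mu> (x u) (r u) \<ge> \<mu> - L * (1 - x u)"
      unfolding L_def by (rule F0') (use pos bx[OF u] in auto)
    then show "- fx a b c d \<mu> (x u) (r u) \<ge> - L * (1 - x u)" using pos by simp
  qed
  moreover have "r t1 \<ge> r 0 * exp (- 1 * (t1 - 0))"
  proof (rule exp_lower[OF dr order_refl t10])
    fix u assume u: "0 < u" "u < t1"
    show "fr \<theta> (x u) (r u) \<ge> - 1 * r u" using F6(1)[OF pos(5) bx[OF u]] by simp
  qed
  moreover have "(1 - r t1) \<ge> (1 - r 0) * exp (- \<theta> * (t1 - 0))"
  proof (rule exp_lower[OF dmr order_refl t10])
    fix u assume u: "0 < u" "u < t1"
    show "- fr \<theta> (x u) (r u) \<ge> - \<theta> * (1 - r u)" using F6(2)[OF pos(5) bx[OF u]] by simp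
  qed
  moreover have "x 0 * exp (- L * (t1 - 0)) > 0" "(1 - x 0) * exp (- L * (t1 - 0)) > 0"
    "r 0 * exp (- 1 * (t1 - 0)) > 0" "(1 - r 0) * exp (- \<theta> * (t1 - 0)) > 0"
    using i0 by simp_all
  ultimately have "P t1" unfolding P_def by linarith
  then show False using t1S unfolding S_def by auto
qed



theorem lemma13:
  fixes a b c d \<theta> :: real
  assumes "a > 0" "b > 0" "c > 0" "d > 0" "\<theta> > 0"
    and "- (\<theta> * a + \<theta>^2 * b) < (\<theta> - 1) * (\<theta> + 1)^2"
    and "(\<theta> - 1) * (\<theta> + 1)^2 < \<theta> * c + \<theta>^2 * d"
  shows "\<forall>\<mu>\<in>{0<..1}. boundary_repelling a b c d \<theta> \<mu>"
proof
  fix \<mu> :: real assume "\<mu> \<in> {0<..1}"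
  then have mu: "0 < \<mu>" "\<mu> \<le> 1" by auto
  note pos = assms(1-5)
  define M where "M = a + b + c + d"
  define L0 where "L0 = M + 2 * \<mu>"
  define \<epsilon> where "\<epsilon> = \<mu> / (2 * L0)"
  have M0: "M > 0" using pos by (simp add: M_def)
  have L00: "L0 > 0" using M0 mu by (simp add: L0_def)
  have \<epsilon>0: "\<epsilon> > 0" using L00 mu by (simp add: \<epsilon>_def)
  have L0\<epsilon>: "L0 * \<epsilon> = \<mu> / 2" using L00 by (simp add: \<epsilon>_def)
  define x0 where "x0 = 1 / (1 + \<theta>)"
  have x0: "0 < x0" "x0 < 1" using pos by (simp_all add: x0_def)
  have tx0: "(\<theta> + 1) * x0 = 1" using pos by (simp add: x0_def)
  obtain X1 m1 where X1: "x0 < X1" "X1 < 1" "m1 > 0" "\<forall>y\<in>{0..X1}. hh a b \<mu> y \<ge> m1"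
  proof -
    have "hh a b \<mu> x0 > 0" unfolding x0_def by (rule hh_x0[OF pos(1,2,5) mu assms(6)])
    from choose_X[OF pos(1,2) mu(1) x0 this] show ?thesis using that by blast
  qed
  define z0 where "z0 = \<theta> / (1 + \<theta>)"
  have z0: "0 < z0" "z0 < 1" using pos by (simp_all add: z0_def)
  have z0x0: "1 - z0 = x0" using pos by (simp add: z0_def x0_def field_simps)
  obtain Z m2 where Z: "z0 < Z" "Z < 1" "m2 > 0" "\<forall>y\<in>{0..Z}. hh d c \<mu> y \<ge> m2"
  proof -
    have "hh d c \<mu> z0 > 0" unfolding z0_def by (rule hh_top[OF pos(3,4,5) mu assms(7)])
    from choose_X[OF pos(4,3) mu(1) z0 this] show ?thesis using that by blast
  qed
  define X2 where "X2 = 1 - Z"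
  define \<eta>1 where "\<eta>1 = min (1/2) (m1 / (2 * M))"
  define \<eta>2 where "\<eta>2 = min (1/2) (m2 / (2 * M))"
  have \<eta>1: "\<eta>1 > 0" "\<eta>1 < 1" "M * \<eta>1 \<le> m1 / 2"
  proof -
    show "\<eta>1 > 0" "\<eta>1 < 1" using X1 M0 by (simp_all add: \<eta>1_def)
    have "\<eta>1 \<le> m1 / (2 * M)" unfolding \<eta>1_def by (rule min.cobounded2)
    then have "M * \<eta>1 \<le> M * (m1 / (2 * M))" using M0 by (intro mult_left_mono) auto
    then show "M * \<eta>1 \<le> m1 / 2" using M0 by simp
  qed
  have \<eta>2: "\<eta>2 > 0" "\<eta>2 < 1" "M * \<eta>2 \<le> m2 / 2"
  proof -
    show "\<eta>2 > 0" "\<eta>2 < 1" using Z M0 by (simp_all add: \<eta>2_def)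
    have "\<eta>2 \<le> m2 / (2 * M)" unfolding \<eta>2_def by (rule min.cobounded2)
    then have "M * \<eta>2 \<le> M * (m2 / (2 * M))" using M0 by (intro mult_left_mono) auto
    then show "M * \<eta>2 \<le> m2 / 2" using M0 by simp
  qed
  define k1 where "k1 = (1 - \<eta>1) * ((\<theta> + 1) * X1 - 1)"
  define k2 where "k2 = (1 - \<eta>2) * (1 - (\<theta> + 1) * X2)"
  have g1: "(\<theta> + 1) * X1 - 1 > 0"
  proof -
    have "(\<theta> + 1) * x0 < (\<theta> + 1) * X1" using X1 pos by simp
    then show ?thesis using tx0 by simp
  qed
  have g2: "1 - (\<theta> + 1) * X2 > 0"
  proof -
    have "X2 < x0" using Z z0x0 by (simp add: X2_def)
    then have "(\<theta> + 1) * X2 < (\<theta> + 1) * x0" using pos by simp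
    then show ?thesis using tx0 by simp
  qed
  have k1: "k1 > 0" using g1 \<eta>1 by (simp add: k1_def)
  have k2: "k2 > 0" using g2 \<eta>2 by (simp add: k2_def)
  define \<delta>1 where "\<delta>1 = \<eta>1 * exp (- 1 * (X1 / (m1 / 2)))"
  define \<delta>2 where "\<delta>2 = \<eta>2 * exp (- \<theta> * (Z / (m2 / 2)))"
  define \<Delta> where "\<Delta> = min \<epsilon> (min \<delta>1 \<delta>2)"
  have \<Delta>0: "\<Delta> > 0" using \<epsilon>0 \<eta>1 \<eta>2 by (simp add: \<Delta>_def \<delta>1_def \<delta>2_def)
  show "boundary_repelling a b c d \<theta> \<mu>" unfolding boundary_repelling_def
  proof (intro exI[of _ "\<Delta> / 2"] conjI allI impI)
    show "\<Delta> / 2 > 0" using \<Delta>0 by simp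
    fix x r :: "real \<Rightarrow> real"
    assume sol: "is_solution a b c d \<theta> \<mu> x r" and ix: "x 0 \<in> {0<..<1}" and ir: "r 0 \<in> {0<..<1}"
    have dx: "\<forall>t\<ge>0. (x has_real_derivative fx a b c d \<mu> (x t) (r t)) (at t within {0..})"
      and dr: "\<forall>t\<ge>0. (r has_real_derivative fr \<theta> (x t) (r t)) (at t within {0..})"
      using sol unfolding is_solution_def by auto
    have dmx: "\<forall>t\<ge>0. ((\<lambda>t. 1 - x t) has_real_derivative - fx a b c d \<mu> (x t) (r t)) (at t within {0..})"
      using dx by (auto intro!: derivative_eq_intros)
    have dmr: "\<forall>t\<ge>0. ((\<lambda>t. 1 - r t) has_real_derivative - fr \<theta> (x t) (r t)) (at t within {0..})"
      using dr by (auto intro!: derivative_eq_intros)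
    have dI: "\<forall>t\<ge>0. ((\<lambda>t. t) has_real_derivative 1) (at t within {0..})"
      by (auto intro!: derivative_eq_intros)
    have inv: "\<forall>t\<ge>0. 0 < x t \<and> x t < 1 \<and> 0 < r t \<and> r t < 1"
      by (rule invariance[OF pos mu(1) dx dr]) (use ix ir in auto)
    have bnd: "0 \<le> x t" "x t \<le> 1" "0 \<le> r t" "r t \<le> 1" if "t \<ge> 0" for t
      using inv that by auto
    have "\<exists>T. \<forall>t\<ge>T. x t \<ge> \<epsilon> * exp (- L0 * (0 / 1))"
    proof (rule strip[where x="\<lambda>t. t" and x'="\<lambda>_. 1" and k="\<mu>/2", OF dI dx])
      show "\<forall>t\<ge>0. 0 < x t" using inv by auto
      show "\<forall>t\<ge>0. 0 \<le> t" by simp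
      show "\<epsilon> > 0" "(0::real) < 1" "\<mu>/2 > 0" "L0 > 0" "(0::real) \<le> 0" using \<epsilon>0 mu L00 by auto
      show "\<forall>t\<ge>0. x t \<le> \<epsilon> \<longrightarrow> t < 0 \<longrightarrow> 1 \<le> (1::real)" by simp
      show "\<forall>t\<ge>0. x t \<le> \<epsilon> \<longrightarrow> 0 \<le> t \<longrightarrow> \<mu> / 2 * x t \<le> fx a b c d \<mu> (x t) (r t)"
      proof (intro allI impI)
        fix t :: real assume t: "t \<ge> 0" "x t \<le> \<epsilon>"
        have "fx a b c d \<mu> (x t) (r t) \<ge> \<mu> - L0 * x t"
          unfolding L0_def M_def by (rule F0) (use pos bnd[OF t(1)] mu in auto)
        moreover have "L0 * x t \<le> L0 * \<epsilon>" using t L00 by (intro mult_left_mono) auto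
        moreover have "\<mu> / 2 * x t \<le> \<mu> / 2" using bnd[OF t(1)] mu
          by (simp add: mult_left_le_one_le)
        ultimately show "\<mu> / 2 * x t \<le> fx a b c d \<mu> (x t) (r t)" using L0\<epsilon> by linarith
      qed
      show "\<forall>t\<ge>0. - L0 * x t \<le> fx a b c d \<mu> (x t) (r t)"
      proof (intro allI impI)
        fix t :: real assume t: "t \<ge> 0"
        have "fx a b c d \<mu> (x t) (r t) \<ge> \<mu> - L0 * x t"
          unfolding L0_def M_def by (rule F0) (use pos bnd[OF t] mu in auto)
        then show "- L0 * x t \<le> fx a b c d \<mu> (x t) (r t)" using mu by simp
      qed
    qed
    then obtain T1 where T1: "\<forall>t\<ge>T1. x t \<ge> \<epsilon>" by auto
    have "\<exists>T. \<forall>t\<ge>T. 1 - x t \<ge> \<epsilon> * exp (- L0 * (0 / 1))"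
    proof (rule strip[where x="\<lambda>t. t" and x'="\<lambda>_. 1" and k="\<mu>/2", OF dI dmx])
      show "\<forall>t\<ge>0. 0 < 1 - x t" using inv by auto
      show "\<forall>t\<ge>0. 0 \<le> t" by simp
      show "\<epsilon> > 0" "(0::real) < 1" "\<mu>/2 > 0" "L0 > 0" "(0::real) \<le> 0" using \<epsilon>0 mu L00 by auto
      show "\<forall>t\<ge>0. 1 - x t \<le> \<epsilon> \<longrightarrow> t < 0 \<longrightarrow> 1 \<le> (1::real)" by simp
      show "\<forall>t\<ge>0. 1 - x t \<le> \<epsilon> \<longrightarrow> 0 \<le> t \<longrightarrow> \<mu> / 2 * (1 - x t) \<le> - fx a b c d \<mu> (x t) (r t)"
      proof (intro allI impI)
        fix t :: real assume t: "t \<ge> 0" "1 - x t \<le> \<epsilon>"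
        have "- fx a b c d \<mu> (x t) (r t) \<ge> \<mu> - L0 * (1 - x t)"
          unfolding L0_def M_def by (rule F0') (use pos bnd[OF t(1)] mu in auto)
        moreover have "L0 * (1 - x t) \<le> L0 * \<epsilon>" using t L00 by (intro mult_left_mono) auto
        moreover have "\<mu> / 2 * (1 - x t) \<le> \<mu> / 2" using bnd[OF t(1)] mu
          by (simp add: mult_left_le_one_le)
        ultimately show "\<mu> / 2 * (1 - x t) \<le> - fx a b c d \<mu> (x t) (r t)" using L0\<epsilon> by linarith
      qed
      show "\<forall>t\<ge>0. - L0 * (1 - x t) \<le> - fx a b c d \<mu> (x t) (r t)"
      proof (intro allI impI)
        fix t :: real assume t: "t \<ge> 0"
        have "- fx a b c d \<mu> (x t) (r t) \<ge> \<mu> - L0 * (1 - x t)"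
          unfolding L0_def M_def by (rule F0') (use pos bnd[OF t] mu in auto)
        then show "- L0 * (1 - x t) \<le> - fx a b c d \<mu> (x t) (r t)" using mu by simp
      qed
    qed
    then obtain T2 where T2: "\<forall>t\<ge>T2. 1 - x t \<ge> \<epsilon>" by auto
    have "\<exists>T. \<forall>t\<ge>T. r t \<ge> \<eta>1 * exp (- 1 * (X1 / (m1 / 2)))"
    proof (rule strip[where k=k1, OF dx dr])
      show "\<forall>t\<ge>0. 0 < r t" "\<forall>t\<ge>0. 0 \<le> x t" using inv by auto
      show "\<eta>1 > 0" "m1 / 2 > 0" "k1 > 0" "(1::real) > 0" "0 \<le> X1" using \<eta>1 X1 k1 x0 by auto
      show "\<forall>t\<ge>0. r t \<le> \<eta>1 \<longrightarrow> x t < X1 \<longrightarrow> m1 / 2 \<le> fx a b c d \<mu> (x t) (r t)"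
      proof (intro allI impI)
        fix t :: real assume t: "t \<ge> 0" "r t \<le> \<eta>1" "x t < X1"
        have "fx a b c d \<mu> (x t) (r t) \<ge> hh a b \<mu> (x t) - M * r t"
          unfolding M_def by (rule F1) (use pos bnd[OF t(1)] in auto)
        moreover have "hh a b \<mu> (x t) \<ge> m1" using X1(4) t bnd[OF t(1)] by auto
        moreover have "M * r t \<le> M * \<eta>1" using t M0 by (intro mult_left_mono) auto
        ultimately show "m1 / 2 \<le> fx a b c d \<mu> (x t) (r t)" using \<eta>1 by linarith
      qed
      show "\<forall>t\<ge>0. r t \<le> \<eta>1 \<longrightarrow> X1 \<le> x t \<longrightarrow> k1 * r t \<le> fr \<theta> (x t) (r t)"
      proof (intro allI impI)
        fix t :: real assume t: "t \<ge> 0" "r t \<le> \<eta>1" "X1 \<le> x t"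
        show "k1 * r t \<le> fr \<theta> (x t) (r t)" unfolding k1_def
          by (rule F8) (use pos bnd[OF t(1)] t \<eta>1 g1 in auto)
      qed
      show "\<forall>t\<ge>0. - 1 * r t \<le> fr \<theta> (x t) (r t)"
        using F6(1)[OF pos(5)] bnd by simp
    qed
    then obtain T3 where T3: "\<forall>t\<ge>T3. r t \<ge> \<delta>1" unfolding \<delta>1_def by auto
    have "\<exists>T. \<forall>t\<ge>T. 1 - r t \<ge> \<eta>2 * exp (- \<theta> * (Z / (m2 / 2)))"
    proof (rule strip[where k=k2, OF dmx dmr])
      show "\<forall>t\<ge>0. 0 < 1 - r t" "\<forall>t\<ge>0. 0 \<le> 1 - x t" using inv by auto
      show "\<eta>2 > 0" "m2 / 2 > 0" "k2 > 0" "\<theta> > 0" "0 \<le> Z" using \<eta>2 Z k2 z0 pos by auto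
      show "\<forall>t\<ge>0. 1 - r t \<le> \<eta>2 \<longrightarrow> 1 - x t < Z \<longrightarrow> m2 / 2 \<le> - fx a b c d \<mu> (x t) (r t)"
      proof (intro allI impI)
        fix t :: real assume t: "t \<ge> 0" "1 - r t \<le> \<eta>2" "1 - x t < Z"
        have "- fx a b c d \<mu> (x t) (r t) \<ge> hh d c \<mu> (1 - x t) - M * (1 - r t)"
          unfolding M_def by (rule F1') (use pos bnd[OF t(1)] in auto)
        moreover have "hh d c \<mu> (1 - x t) \<ge> m2" using Z(4) t bnd[OF t(1)] by auto
        moreover have "M * (1 - r t) \<le> M * \<eta>2" using t M0 by (intro mult_left_mono) auto
        ultimately show "m2 / 2 \<le> - fx a b c d \<mu> (x t) (r t)" using \<eta>2 by linarith
      qed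
      show "\<forall>t\<ge>0. 1 - r t \<le> \<eta>2 \<longrightarrow> Z \<le> 1 - x t \<longrightarrow> k2 * (1 - r t) \<le> - fr \<theta> (x t) (r t)"
      proof (intro allI impI)
        fix t :: real assume t: "t \<ge> 0" "1 - r t \<le> \<eta>2" "Z \<le> 1 - x t"
        show "k2 * (1 - r t) \<le> - fr \<theta> (x t) (r t)" unfolding k2_def
          by (rule F9) (use pos bnd[OF t(1)] t \<eta>2 g2 X2_def in auto)
      qed
      show "\<forall>t\<ge>0. - \<theta> * (1 - r t) \<le> - fr \<theta> (x t) (r t)"
        using F6(2)[OF pos(5)] bnd by simp
    qed
    then obtain T4 where T4: "\<forall>t\<ge>T4. 1 - r t \<ge> \<delta>2" unfolding \<delta>2_def by auto
    have ev: "\<forall>t\<ge>max (max T1 T2) (max T3 T4). \<Delta> \<le> infdist (x t, r t) square_boundary"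
    proof (intro allI impI)
      fix t assume t: "t \<ge> max (max T1 T2) (max T3 T4)"
      have "\<Delta> \<le> \<epsilon>" "\<Delta> \<le> \<delta>1" "\<Delta> \<le> \<delta>2" unfolding \<Delta>_def by auto
      then show "\<Delta> \<le> infdist (x t, r t) square_boundary"
        using T1 T2 T3 T4 t by (intro infdist_lb) force+
    qed
    have "ereal \<Delta> \<le> Liminf at_top (\<lambda>t. ereal (infdist (x t, r t) square_boundary))"
    proof (rule Liminf_bounded)
      show "\<forall>\<^sub>F t in at_top. ereal \<Delta> \<le> ereal (infdist (x t, r t) square_boundary)"
        unfolding eventually_at_top_linorder
        by (rule exI[of _ "max (max T1 T2) (max T3 T4)"]) (use ev in simp)
    qed
    moreover have "ereal (\<Delta> / 2) < ereal \<Delta>" using \<Delta>0 by simp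
    ultimately show "Liminf at_top (\<lambda>t. ereal (infdist (x t, r t) square_boundary)) > ereal (\<Delta> / 2)"
      by (rule order.strict_trans2[rotated])
  qed
qed


end
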